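(* Let $\mathcal{Y}=\{1,\dots,K\}$, let $f:\mathcal{X}\to\Delta_K$ be a fixed probabilistic predictor, and let $\Delta_K=B_1\cup\cdots\cup B_M$ be a partition into disjoint bins, $\mathcal{M}=\{1,\dots,M\}$, with bin-mapping $g:\mathcal{X}\to\mathcal{M}$, $g(x)=m$ iff $f(x)\in B_m$. Let $(X_1,Y_1),\dots,(X_n,Y_n)$ be i.i.d. from a distribution $P$ on $\mathcal{X}\times\mathcal{Y}$, and let $(X,Y)\sim P$ be independent of them. For $m\in\mathcal{M}$ and $y\in\mathcal{Y}$ let $\pi^P_{y,m}=\mathbb{P}(Y=y\mid f(X)\in B_m)$, $N_m=|\{i: f(X_i)\in B_m\}|$, $\widehat{\pi}^P_{y,m}=\frac1{N_m}\sum_{i=1}^n\mathbf{1}\{Y_i=y,f(X_i)\in B_m\}$, and write $\pi^P_m=(\pi^P_{1,m},\dots,\pi^P_{K,m})^\top$, $\widehat{\pi}^P_m=(\widehat{\pi}^P_{1,m},\dots,\widehat{\pi}^P_{K,m})^\top$. Let $h:\mathcal{X}\to\Delta_K$, $h(x)=\widehat{\pi}^P_{g(x)}$. Fix $\alpha\in(0,1)$ and set $$\varepsilon_m=\frac{2}{\sqrt{N_m}}\sqrt{\frac12\ln\Big(\frac{M2^K}{\alpha}\Big)}.$$ Then with probability at least $1-\alpha$ (over the calibration data), $\|\widehat{\pi}^P_m-\pi^P_m\|_1\le\varepsilon_m$ simultaneously for all $m\in\mathcal{M}$. As a consequence, with probability at least $1-\alpha$, $$\sum_{y=1}^K\big|\mathbb{P}(Y=y\mid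 h(X)=z)-z_y\big|\le\max_{m\in\mathcal{M}}\varepsilon_m$$ simultaneously for all $z$ in the range of $h$.
   Context: $\Delta_K$ denotes the probability simplex in $\mathbb{R}^K$, and $z_y$ is the $y$-th coordinate of $z\in\Delta_K$. *)

theory Defs
  imports "HOL-Probability.Probability"
begin

definition prob_simplex :: "nat \<Rightarrow> (nat \<Rightarrow> real) set" where
  "prob_simplex K = {z. (\<forall>i. 0 \<le> z i) \<and> (\<forall>i. i \<notin> {1..K} \<longrightarrow> z i = 0) \<and> (\<Sum>i=1..K. z i) = 1}"

definition bin_count :: "('x \<Rightarrow> nat) \<Rightarrow> nat \<Rightarrow> (nat \<Rightarrow> 'x \<times> nat) \<Rightarrow> nat \<Rightarrow> nat" where
  "bin_count g n \<omega> m = card {i\<in>{1..n}. g (fst (\<omega> i)) = m}"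

definition pi_hat :: "('x \<Rightarrow> nat) \<Rightarrow> nat \<Rightarrow> nat \<Rightarrow> (nat \<Rightarrow> 'x \<times> nat) \<Rightarrow> nat \<Rightarrow> nat \<Rightarrow> real" where
  "pi_hat g K n \<omega> m = (\<lambda>y. if y \<in> {1..K} then
      real (card {i\<in>{1..n}. snd (\<omega> i) = y \<and> g (fst (\<omega> i)) = m}) / real (bin_count g n \<omega> m)
    else 0)"

definition pi_true :: "('x \<times> nat) measure \<Rightarrow> ('x \<Rightarrow> nat) \<Rightarrow> nat \<Rightarrow> nat \<Rightarrow> nat \<Rightarrow> real" where
  "pi_true P g K m = (\<lambda>y. if y \<in> {1..K} then
      measure P {p\<in>space P. snd p = y \<and> g (fst p) = m} / measure P {p\<in>space P. g (fst p) = m}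
    else 0)"

definition recal :: "('x \<Rightarrow> nat) \<Rightarrow> nat \<Rightarrow> nat \<Rightarrow> (nat \<Rightarrow> 'x \<times> nat) \<Rightarrow> 'x \<Rightarrow> nat \<Rightarrow> real" where
  "recal g K n \<omega> x = pi_hat g K n \<omega> (g x)"

text \<open>epsilon_m as a function of N_m (only used when N_m > 0).\<close>
definition eps :: "nat \<Rightarrow> nat \<Rightarrow> real \<Rightarrow> nat \<Rightarrow> real" where
  "eps M K \<alpha> N = 2 / sqrt (real N) * sqrt (1/2 * ln (real M * 2 ^ K / \<alpha>))"

definition l1dist :: "nat \<Rightarrow> (nat \<Rightarrow> real) \<Rightarrow> (nat \<Rightarrow> real) \<Rightarrow> real" where
  "l1dist K u v = (\<Sum>y=1..K. \<bar>u y - v y\<bar>)"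

end

theory Submission
  imports Defs
begin


locale calib =
  fixes MX :: "'x measure" and P :: "('x \<times> nat) measure"
    and f :: "'x \<Rightarrow> nat \<Rightarrow> real" and B :: "nat \<Rightarrow> (nat \<Rightarrow> real) set"
    and g :: "'x \<Rightarrow> nat" and K M n :: nat and \<alpha> :: real
  assumes K: "K \<ge> 1" and Mpos: "M \<ge> 1"
    and f_simplex: "\<forall>x\<in>space MX. f x \<in> prob_simplex K"
    and bins_cover: "(\<Union>m\<in>{1..M}. B m) = prob_simplex K"
    and bins_disj: "\<forall>m\<in>{1..M}. \<forall>m'\<in>{1..M}. m \<noteq> m' \<longrightarrow> B m \<inter> B m' = {}"
    and bins_meas: "\<forall>m\<in>{1..M}. f -` B m \<inter> space MX \<in> sets MX"
    and g_def: "\<forall>x\<in>space MX. \<forall>m\<in>{1..M}. g x = m \<longleftrightarrow> f x \<in> B m"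
    and P: "prob_space P" and P_sets: "sets P = sets (MX \<Otimes>\<^sub>M count_space {1..K})"
    and alpha: "0 < \<alpha>" "\<alpha> < 1"
begin

lemma spaceP: "space P = space MX \<times> {1..K}"
  using sets_eq_imp_space_eq[OF P_sets] by (simp add: space_pair_measure)

lemma g_range: "x \<in> space MX \<Longrightarrow> g x \<in> {1..M}"
proof -
  assume x: "x \<in> space MX"
  then have "f x \<in> (\<Union>m\<in>{1..M}. B m)" using f_simplex bins_cover by auto
  then obtain m where "m \<in> {1..M}" "f x \<in> B m" by auto
  then have "g x = m" using g_def x by blast
  then show ?thesis using \<open>m \<in> {1..M}\<close> by simp
qed

lemma g_meas: "g \<in> measurable MX (count_space UNIV)"
proof (subst measurable_count_space_eq2_countable, safe)
  fix a :: nat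
  show "g -` {a} \<inter> space MX \<in> sets MX"
  proof (cases "a \<in> {1..M}")
    case True
    then have "g -` {a} \<inter> space MX = f -` B a \<inter> space MX" using g_def True by blast
    then show ?thesis using bins_meas True by simp
  next
    case False
    then have "g -` {a} \<inter> space MX = {}" using g_range by auto
    then show ?thesis by simp
  qed
qed auto

definition G :: "'x \<times> nat \<Rightarrow> nat \<times> nat" where "G p = (g (fst p), snd p)"

lemma G_meas: "G \<in> measurable P (count_space UNIV)"
proof -
  have "G \<in> measurable (MX \<Otimes>\<^sub>M count_space {1..K}) (count_space UNIV)"
  proof (subst measurable_count_space_eq2_countable, safe)
    fix a b
    have "G -` {(a, b)} \<inter> space (MX \<Otimes>\<^sub>M count_space {1..K}) = (g -` {a} \<inter> space MX) \<times> ({b} \<inter> {1..K})"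
      by (auto simp: G_def space_pair_measure)
    moreover have "g -` {a} \<inter> space MX \<in> sets MX"
      using g_meas by (simp add: measurable_count_space_eq2_countable)
    ultimately show "G -` {(a, b)} \<inter> space (MX \<Otimes>\<^sub>M count_space {1..K}) \<in> sets (MX \<Otimes>\<^sub>M count_space {1..K})"
      by auto
  qed auto
  then show ?thesis using measurable_cong_sets[OF P_sets refl] by blast
qed

lemma setP: "{p\<in>space P. R (G p)} \<in> sets P"
proof -
  have "{p\<in>space P. R (G p)} = G -` {v. R v} \<inter> space P" by auto
  then show ?thesis using measurable_sets[OF G_meas, of "{v. R v}"] by simp
qed


abbreviation "Q \<equiv> PiM {1..n} (\<lambda>_. P)"

definition psi :: "(nat \<Rightarrow> 'x \<times> nat) \<Rightarrow> nat \<Rightarrow> nat \<times> nat" where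
  "psi \<omega> = restrict (\<lambda>i. G (\<omega> i)) {1..n}"

lemma G_range: "p \<in> space P \<Longrightarrow> G p \<in> {1..M} \<times> {1..K}"
  using g_range spaceP by (auto simp: G_def)

lemma psi_range: "\<omega> \<in> space Q \<Longrightarrow> psi \<omega> \<in> PiE {1..n} (\<lambda>_. {1..M} \<times> {1..K})"
proof -
  assume "\<omega> \<in> space Q"
  then have "\<forall>i\<in>{1..n}. \<omega> i \<in> space P" by (auto simp: space_PiM)
  then show ?thesis using G_range unfolding psi_def restrict_PiE_iff by blast
qed

lemma G_meas'[measurable]: "G \<in> measurable P (count_space UNIV)"
  by (rule G_meas)

lemma setQ:
  assumes inv: "\<And>\<omega> \<omega>'. \<omega> \<in> space Q \<Longrightarrow> \<omega>' \<in> space Q \<Longrightarrow> psi \<omega> = psi \<omega>' \<Longrightarrow> R \<omega> \<Longrightarrow> R \<omega>'"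
  shows "{\<omega>\<in>space Q. R \<omega>} \<in> sets Q"
proof -
  let ?V = "psi ` {\<omega>\<in>space Q. R \<omega>}"
  have fin: "finite ?V"
  proof (rule finite_subset)
    show "?V \<subseteq> PiE {1..n} (\<lambda>_. {1..M} \<times> {1..K})" using psi_range by blast
    show "finite (PiE {1..n} (\<lambda>_. {1..M} \<times> {1..K}))" by (intro finite_PiE) auto
  qed
  have eq: "{\<omega>\<in>space Q. R \<omega>} = (\<Union>v\<in>?V. {\<omega>\<in>space Q. \<forall>i\<in>{1..n}. G (\<omega> i) = v i})"
  proof (safe)
    fix \<omega> assume "\<omega> \<in> space Q" "R \<omega>"
    then show "\<omega> \<in> (\<Union>v\<in>?V. {\<omega>\<in>space Q. \<forall>i\<in>{1..n}. G (\<omega> i) = v i})"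
      by (auto simp: psi_def)
  next
    fix \<omega> \<omega>' assume a: "\<omega>' \<in> space Q" "R \<omega>'" "\<omega> \<in> space Q" "\<forall>i\<in>{1..n}. G (\<omega> i) = psi \<omega>' i"
    then have "psi \<omega>' = psi \<omega>" by (auto simp: psi_def)
    then show "R \<omega>" using inv a by blast
  qed
  have Sv: "{\<omega>\<in>space Q. \<forall>i\<in>{1..n}. G (\<omega> i) = v i} \<in> sets Q" for v
  proof -
    have m: "(\<lambda>\<omega>. G (\<omega> i)) \<in> measurable Q (count_space UNIV)" if "i \<in> {1..n}" for i
      using measurable_compose[OF measurable_component_singleton[OF that] G_meas] .
    have Ai: "{\<omega>\<in>space Q. G (\<omega> i) = v i} \<in> sets Q" if "i \<in> {1..n}" for i
    proof -
      have "{\<omega>\<in>space Q. G (\<omega> i) = v i} = (\<lambda>\<omega>. G (\<omega> i)) -` {v i} \<inter> space Q" by auto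
      then show ?thesis using measurable_sets[OF m[OF that], of "{v i}"] by simp
    qed
    have X: "space Q \<inter> (\<Inter>i\<in>{1..n}. {\<omega>\<in>space Q. G (\<omega> i) = v i}) \<in> sets Q"
    proof (cases "{1..n} = ({}::nat set)")
      case True
      then show ?thesis by simp
    next
      case False
      show ?thesis
        by (rule sets.Int[OF sets.top sets.finite_INT]) (use False Ai in auto)
    qed
    have Y: "{\<omega>\<in>space Q. \<forall>i\<in>{1..n}. G (\<omega> i) = v i} = space Q \<inter> (\<Inter>i\<in>{1..n}. {\<omega>\<in>space Q. G (\<omega> i) = v i})"
      by auto
    show ?thesis unfolding Y by (rule X)
  qed
  have U: "(\<Union>v\<in>?V. {\<omega>\<in>space Q. \<forall>i\<in>{1..n}. G (\<omega> i) = v i}) \<in> sets Q"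
    by (rule sets.finite_UN[OF fin]) (rule Sv)
  from U show ?thesis by (simp only: eq[symmetric])
qed

lemma bin_count_inv: "psi \<omega> = psi \<omega>' \<Longrightarrow> bin_count g n \<omega> = bin_count g n \<omega>'"
proof -
  assume h: "psi \<omega> = psi \<omega>'"
  have "\<And>i. i \<in> {1..n} \<Longrightarrow> G (\<omega> i) = G (\<omega>' i)" using h unfolding psi_def by (metis restrict_apply')
  then have "\<And>i. i \<in> {1..n} \<Longrightarrow> g (fst (\<omega> i)) = g (fst (\<omega>' i)) \<and> snd (\<omega> i) = snd (\<omega>' i)"
    by (auto simp: G_def)
  then show ?thesis unfolding bin_count_def by (intro ext arg_cong[where f=card]) auto
qed

lemma pi_hat_inv: "psi \<omega> = psi \<omega>' \<Longrightarrow> pi_hat g K n \<omega> = pi_hat g K n \<omega>'"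
proof -
  assume h: "psi \<omega> = psi \<omega>'"
  have "\<And>i. i \<in> {1..n} \<Longrightarrow> G (\<omega> i) = G (\<omega>' i)" using h unfolding psi_def by (metis restrict_apply')
  then have e: "\<And>i. i \<in> {1..n} \<Longrightarrow> g (fst (\<omega> i)) = g (fst (\<omega>' i)) \<and> snd (\<omega> i) = snd (\<omega>' i)"
    by (auto simp: G_def)
  have seq: "\<And>m y. {i\<in>{1..n}. snd (\<omega> i) = y \<and> g (fst (\<omega> i)) = m} = {i\<in>{1..n}. snd (\<omega>' i) = y \<and> g (fst (\<omega>' i)) = m}"
    using e by auto
  show ?thesis unfolding pi_hat_def seq bin_count_inv[OF h] by (rule refl)
qed

lemma recal_inv: "psi \<omega> = psi \<omega>' \<Longrightarrow> recal g K n \<omega> = recal g K n \<omega>'"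
proof -
  assume h: "psi \<omega> = psi \<omega>'"
  show ?thesis unfolding recal_def[abs_def] pi_hat_inv[OF h] by (rule refl)
qed

lemma probQ: "prob_space Q"
  by (rule prob_space_PiM) (rule P)

lemma INT:
  fixes a b :: "'x \<times> nat \<Rightarrow> real"
  assumes "integrable P a" "integrable P b" "J \<subseteq> {1..n}"
  shows "(\<integral>\<omega>. (\<Prod>i\<in>{1..n}. (if i \<in> J then a else b) (\<omega> i)) \<partial>Q) = (integral\<^sup>L P a) ^ card J * (integral\<^sup>L P b) ^ (n - card J)"
proof -
  interpret PP: product_prob_space "\<lambda>_. P" "{1..n}"
    unfolding product_prob_space_def product_prob_space_axioms_def product_sigma_finite_def
    using P prob_space_imp_sigma_finite by auto
  have "(\<integral>\<omega>. (\<Prod>i\<in>{1..n}. (if i \<in> J then a else b) (\<omega> i)) \<partial>Q) = (\<Prod>i\<in>{1..n}. integral\<^sup>L P (if i \<in> J then a else b))"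
    by (rule PP.product_integral_prod) (use assms in auto)
  also have "\<dots> = (\<Prod>i\<in>{1..n}. if i \<in> J then integral\<^sup>L P a else integral\<^sup>L P b)"
    by (intro prod.cong) auto
  also have "\<dots> = (integral\<^sup>L P a) ^ card J * (integral\<^sup>L P b) ^ (n - card J)"
  proof -
    have c: "card ({1..n} - J) = n - card J" using assms(3) by (simp add: card_Diff_subset finite_subset)
    have d: "{1..n} \<inter> - J = {1..n} - J" by auto
    have e: "{1..n} \<inter> J = J" using assms(3) by auto
    have c2: "card ({Suc 0..n} \<inter> - J) = n - card J" using c d by simp
    have e2: "{Suc 0..n} \<inter> J = J" using e by simp
    show ?thesis
      using assms(3) by (simp add: prod.If_cases c2 e2)
  qed
  finally show ?thesis .
qed

lemma INTable:
  fixes a b :: "'x \<times> nat \<Rightarrow> real"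
  assumes "integrable P a" "integrable P b"
  shows "integrable Q (\<lambda>\<omega>. (\<Prod>i\<in>{1..n}. (if i \<in> J then a else b) (\<omega> i)))"
proof -
  interpret PP: product_prob_space "\<lambda>_. P" "{1..n}"
    unfolding product_prob_space_def product_prob_space_axioms_def product_sigma_finite_def
    using P prob_space_imp_sigma_finite by auto
  show ?thesis
    by (rule PP.product_integrable_prod) (use assms in auto)
qed


lemma intG:
  fixes h :: "nat \<times> nat \<Rightarrow> real"
  shows "integrable P (\<lambda>p. h (G p))"
proof -
  interpret P: prob_space P by (rule P)
  let ?B = "\<Sum>v\<in>{1..M} \<times> {1..K}. \<bar>h v\<bar>"
  show ?thesis
  proof (rule P.integrable_const_bound[where B = ?B])
    show "AE x in P. norm (h (G x)) \<le> ?B"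
    proof (rule AE_I2)
      fix x assume "x \<in> space P"
      then have "G x \<in> {1..M} \<times> {1..K}" by (rule G_range)
      then show "norm (h (G x)) \<le> ?B"
        by (auto intro!: member_le_sum[where f = "\<lambda>v. \<bar>h v\<bar>", simplified])
    qed
    show "(\<lambda>p. h (G p)) \<in> borel_measurable P"
      by (rule measurable_compose[OF G_meas]) simp
  qed
qed

lemma Pmeas_sum:
  assumes "finite T"
  shows "measure P {p\<in>space P. \<phi> (G p) \<in> T \<and> R (G p)} = (\<Sum>t\<in>T. measure P {p\<in>space P. \<phi> (G p) = t \<and> R (G p)})"
proof -
  interpret P: prob_space P by (rule P)
  have "{p\<in>space P. \<phi> (G p) \<in> T \<and> R (G p)} = (\<Union>t\<in>T. {p\<in>space P. \<phi> (G p) = t \<and> R (G p)})" by auto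
  moreover have "measure P (\<Union>t\<in>T. {p\<in>space P. \<phi> (G p) = t \<and> R (G p)}) = (\<Sum>t\<in>T. measure P {p\<in>space P. \<phi> (G p) = t \<and> R (G p)})"
    by (rule measure_finite_Union) (auto simp: assms setP disjoint_family_on_def)
  ultimately show ?thesis by simp
qed

end

lemma hoeff_bern:
  fixes p l :: real
  assumes "0 \<le> p" "p \<le> 1" "0 \<le> l"
  shows "p * exp (l * (1 - p)) + (1 - p) * exp (- l * p) \<le> exp (l\<^sup>2 / 8)"
proof -
  have pos: "1 + p * (exp l - 1) > 0"
    using assms by (intro add_pos_nonneg mult_nonneg_nonneg) auto
  have "- l * p + ln (1 + p * (exp l - 1)) \<le> l\<^sup>2 / 8"
    using Hoeffdings_lemma_aux[of l p] assms by simp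
  then have "exp (- l * p + ln (1 + p * (exp l - 1))) \<le> exp (l\<^sup>2 / 8)" by simp
  also have "exp (- l * p + ln (1 + p * (exp l - 1))) = exp (- l * p) * (1 + p * (exp l - 1))"
    using pos by (simp add: exp_diff exp_minus field_simps)
  also have "exp (- l * p) * (1 + p * (exp l - 1)) = p * exp (l * (1 - p)) + (1 - p) * exp (- l * p)"
    by (simp add: algebra_simps exp_diff exp_minus field_simps)
  finally show ?thesis .
qed

lemma exp_arith:
  fixes L q :: real and k :: nat
  assumes "k > 0" "L \<ge> 0" "q \<ge> 0"
  shows "exp (- sqrt (8 * L / k) * sqrt (k * L / 2)) * (q * exp ((sqrt (8 * L / k))\<^sup>2 / 8)) ^ k = exp (- L) * q ^ k"
proof -
  have a: "sqrt (8 * L / k) * sqrt (k * L / 2) = 2 * L"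
  proof -
    have "sqrt (8 * L / k) * sqrt (k * L / 2) = sqrt ((2 * L)\<^sup>2)"
      unfolding real_sqrt_mult[symmetric] using assms by (simp add: power2_eq_square field_simps)
    also have "\<dots> = 2 * L" using assms real_sqrt_abs[of "2 * L"] by simp
    finally show ?thesis .
  qed
  have b: "(sqrt (8 * L / k))\<^sup>2 / 8 = L / k" using assms by simp
  have e: "exp (L / k) ^ k = exp L"
    using assms by (simp add: exp_of_nat_mult[symmetric])
  have "exp (- sqrt (8 * L / k) * sqrt (k * L / 2)) * (q * exp ((sqrt (8 * L / k))\<^sup>2 / 8)) ^ k
      = exp (- (2 * L)) * (q ^ k * exp (L / k) ^ k)"
    by (simp only: mult_minus_left a b power_mult_distrib)
  also have "\<dots> = exp (- (2 * L)) * exp L * q ^ k" unfolding e by simp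
  also have "exp (- (2 * L)) * exp L = exp (- L)" by (simp add: exp_add[symmetric])
  finally show ?thesis .
qed


context calib
begin

lemma psi_eqD: "psi \<omega> = psi \<omega>' \<Longrightarrow> i \<in> {1..n} \<Longrightarrow> g (fst (\<omega> i)) = g (fst (\<omega>' i)) \<and> snd (\<omega> i) = snd (\<omega>' i)"
proof -
  assume h: "psi \<omega> = psi \<omega>'" and i: "i \<in> {1..n}"
  have "psi \<omega> i = psi \<omega>' i" using h by simp
  then show ?thesis using i by (simp add: psi_def G_def)
qed

definition aF :: "nat \<Rightarrow> nat set \<Rightarrow> real \<Rightarrow> real \<Rightarrow> 'x \<times> nat \<Rightarrow> real" where
  "aF m S l c p = (if g (fst p) = m then exp (l * ((if snd p \<in> S then 1 else 0) - c)) else 0)"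

definition bF :: "nat \<Rightarrow> 'x \<times> nat \<Rightarrow> real" where
  "bF m p = (if g (fst p) = m then 0 else 1)"

lemma aF_int: "integrable P (aF m S l c)"
proof -
  have "aF m S l c = (\<lambda>p. (\<lambda>v. if fst v = m then exp (l * ((if snd v \<in> S then 1 else 0) - c)) else 0) (G p))"
    by (simp add: aF_def G_def fun_eq_iff)
  then show ?thesis using intG by simp
qed

lemma bF_int: "integrable P (bF m)"
proof -
  have "bF m = (\<lambda>p. (\<lambda>v. if fst v = m then 0 else 1::real) (G p))"
    by (simp add: bF_def G_def fun_eq_iff)
  then show ?thesis using intG by simp
qed

lemma setBm: "{p\<in>space P. g (fst p) = m} \<in> sets P"
  using setP[of "\<lambda>v. fst v = m"] by (simp add: G_def)
lemma setA1: "{p\<in>space P. snd p \<in> S \<and> g (fst p) = m} \<in> sets P"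
  using setP[of "\<lambda>v. snd v \<in> S \<and> fst v = m"] by (simp add: G_def)
lemma setA2: "{p\<in>space P. snd p \<notin> S \<and> g (fst p) = m} \<in> sets P"
  using setP[of "\<lambda>v. snd v \<notin> S \<and> fst v = m"] by (simp add: G_def)

lemma int_a:
  "integral\<^sup>L P (aF m S l c) = measure P {p\<in>space P. snd p \<in> S \<and> g (fst p) = m} * exp (l * (1 - c))
     + (measure P {p\<in>space P. g (fst p) = m} - measure P {p\<in>space P. snd p \<in> S \<and> g (fst p) = m}) * exp (- l * c)"
proof -
  interpret P: prob_space P by (rule P)
  let ?A1 = "{p\<in>space P. snd p \<in> S \<and> g (fst p) = m}"
  let ?A2 = "{p\<in>space P. snd p \<notin> S \<and> g (fst p) = m}"
  let ?Bm = "{p\<in>space P. g (fst p) = m}"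
  have "integral\<^sup>L P (aF m S l c) = integral\<^sup>L P (\<lambda>p. exp (l * (1 - c)) * indicator ?A1 p + exp (- l * c) * indicator ?A2 p)"
    by (rule Bochner_Integration.integral_cong[OF refl]) (auto simp: aF_def indicator_def)
  also have "\<dots> = exp (l * (1 - c)) * measure P ?A1 + exp (- l * c) * measure P ?A2"
  proof -
    have i1: "integrable P (\<lambda>p. exp (l * (1 - c)) * indicator ?A1 p)"
      using setA1[of S m] by (intro integrable_mult_right integrable_real_indicator) (auto simp: P.emeasure_finite less_top[symmetric])
    have i2: "integrable P (\<lambda>p. exp (- l * c) * indicator ?A2 p)"
      using setA2[of S m] by (intro integrable_mult_right integrable_real_indicator) (auto simp: P.emeasure_finite less_top[symmetric])
    have s1: "?A1 \<inter> space P = ?A1" "?A2 \<inter> space P = ?A2" by auto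
    show ?thesis unfolding Bochner_Integration.integral_add[OF i1 i2] by (simp add: s1)
  qed
  also have "?A2 = ?Bm - ?A1" by auto
  also have "measure P (?Bm - ?A1) = measure P ?Bm - measure P ?A1"
    using setA1[of S m] setBm[of m] by (intro P.finite_measure_Diff) auto
  finally show ?thesis by (simp add: algebra_simps)
qed

lemma int_b: "integral\<^sup>L P (bF m) = 1 - measure P {p\<in>space P. g (fst p) = m}"
proof -
  interpret P: prob_space P by (rule P)
  have "integral\<^sup>L P (bF m) = integral\<^sup>L P (indicator (space P - {p\<in>space P. g (fst p) = m}))"
    by (rule Bochner_Integration.integral_cong[OF refl]) (auto simp: bF_def indicator_def)
  also have "\<dots> = 1 - measure P {p\<in>space P. g (fst p) = m}"
    using setBm[of m] by (simp add: Int_absorb2 P.prob_compl)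
  finally show ?thesis .
qed




end



context calib begin
lemma main:
  fixes m :: nat and S :: "nat set" and L :: real
  defines "q \<equiv> measure P {p\<in>space P. g (fst p) = m}"
  defines "pS \<equiv> measure P {p\<in>space P. snd p \<in> S \<and> g (fst p) = m} / q"
  assumes qpos: "q > 0" and L: "L \<ge> 0"
  shows "measure Q {\<omega>\<in>space Q. bin_count g n \<omega> m > 0 \<and>
     sqrt (real (bin_count g n \<omega> m) * L / 2) \<le> real (card {i\<in>{1..n}. snd (\<omega> i) \<in> S \<and> g (fst (\<omega> i)) = m}) - real (bin_count g n \<omega> m) * pS}
     \<le> exp (- L)"
proof -
  interpret P: prob_space P by (rule P)
  interpret QQ: prob_space Q by (rule probQ)
  define r where "r = measure P {p\<in>space P. snd p \<in> S \<and> g (fst p) = m}"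
  have r_le: "r \<le> q" unfolding r_def q_def
    using setBm[of m] by (intro P.finite_measure_mono) auto
  have r_nn: "0 \<le> r" unfolding r_def by simp
  have q_le: "q \<le> 1" unfolding q_def by simp
  have pS01: "0 \<le> pS" "pS \<le> 1" using r_le r_nn qpos unfolding pS_def r_def[symmetric] by auto
  have r_eq: "r = q * pS" unfolding pS_def r_def[symmetric] using qpos by simp
  define lam where "lam k = sqrt (8 * L / real k)" for k :: nat
  have lam_nn: "lam k \<ge> 0" for k unfolding lam_def using L by simp
  define a where "a J = aF m S (lam (card J)) pS" for J :: "nat set"
  define b where "b = bF m"
  define tm where "tm J \<omega> = exp (- lam (card J) * sqrt (card J * L / 2)) * (\<Prod>i\<in>{1..n}. (if i \<in> J then a J else b) (\<omega> i))" for J \<omega>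
  define F where "F \<omega> = (\<Sum>J\<in>Pow {1..n} - {{}}. tm J \<omega>)" for \<omega>
  define E where "E = {\<omega>\<in>space Q. bin_count g n \<omega> m > 0 \<and>
     sqrt (real (bin_count g n \<omega> m) * L / 2) \<le> real (card {i\<in>{1..n}. snd (\<omega> i) \<in> S \<and> g (fst (\<omega> i)) = m}) - real (bin_count g n \<omega> m) * pS}"
  have Esets: "E \<in> sets Q" unfolding E_def
  proof (rule setQ)
    fix \<omega> \<omega>' assume h: "psi \<omega> = psi \<omega>'"
    have "{i\<in>{1..n}. snd (\<omega> i) \<in> S \<and> g (fst (\<omega> i)) = m} = {i\<in>{1..n}. snd (\<omega>' i) \<in> S \<and> g (fst (\<omega>' i)) = m}"
      using psi_eqD[OF h] by auto
    then show "0 < bin_count g n \<omega> m \<and> sqrt (real (bin_count g n \<omega> m) * L / 2) \<le> real (card {i\<in>{1..n}. snd (\<omega> i) \<in> S \<and> g (fst (\<omega> i)) = m}) - real (bin_count g n \<omega> m) * pS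
      \<Longrightarrow> 0 < bin_count g n \<omega>' m \<and> sqrt (real (bin_count g n \<omega>' m) * L / 2) \<le> real (card {i\<in>{1..n}. snd (\<omega>' i) \<in> S \<and> g (fst (\<omega>' i)) = m}) - real (bin_count g n \<omega>' m) * pS"
      using bin_count_inv[OF h] by simp
  qed
  have a_nn: "a J p \<ge> 0" for J p unfolding a_def aF_def by simp
  have b_nn: "b p \<ge> 0" for p unfolding b_def bF_def by simp
  have tm_nn: "tm J \<omega> \<ge> 0" for J \<omega> unfolding tm_def
    using a_nn b_nn by (intro mult_nonneg_nonneg prod_nonneg) auto
  have F_nn: "F \<omega> \<ge> 0" for \<omega> unfolding F_def using tm_nn by (intro sum_nonneg) auto
  have tm_int: "integrable Q (tm J)" for J unfolding tm_def[abs_def]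
    by (intro integrable_mult_right INTable) (auto simp: a_def b_def aF_int bF_int)
  have F_int: "integrable Q F" unfolding F_def[abs_def] using tm_int by (intro Bochner_Integration.integrable_sum) auto
  have pw: "1 \<le> F \<omega>" if "\<omega> \<in> E" for \<omega>
  proof -
    define J0 where "J0 = {i\<in>{1..n}. g (fst (\<omega> i)) = m}"
    define N where "N = bin_count g n \<omega> m"
    define cnt where "cnt = card {i\<in>{1..n}. snd (\<omega> i) \<in> S \<and> g (fst (\<omega> i)) = m}"
    have cJ0: "card J0 = N" unfolding J0_def N_def bin_count_def by simp
    have Npos: "N > 0" and ineq: "sqrt (real N * L / 2) \<le> real cnt - real N * pS"
      using that unfolding E_def N_def cnt_def by auto
    have J0ne: "J0 \<noteq> {}" using Npos cJ0 by (metis card.empty less_irrefl)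
    have J0sub: "J0 \<subseteq> {1..n}" unfolding J0_def by auto
    have J0in: "J0 \<in> Pow {1..n} - {{}}" using J0ne J0sub by simp
    have fJ0: "finite J0" unfolding J0_def by simp
    have "(\<Prod>i\<in>{1..n}. (if i \<in> J0 then a J0 else b) (\<omega> i))
        = (\<Prod>i\<in>{1..n}. if g (fst (\<omega> i)) = m then exp (lam N * ((if snd (\<omega> i) \<in> S then 1 else 0) - pS)) else 1)"
      by (intro prod.cong refl) (auto simp: J0_def a_def b_def aF_def bF_def cJ0[symmetric])
    also have "\<dots> = (\<Prod>i\<in>J0. exp (lam N * ((if snd (\<omega> i) \<in> S then 1 else 0) - pS)))"
      unfolding J0_def by (rule prod.inter_filter[symmetric]) simp
    also have "\<dots> = exp (\<Sum>i\<in>J0. lam N * ((if snd (\<omega> i) \<in> S then 1 else 0) - pS))"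
      using fJ0 by (simp add: exp_sum)
    also have "(\<Sum>i\<in>J0. lam N * ((if snd (\<omega> i) \<in> S then 1 else 0) - pS)) = lam N * ((\<Sum>i\<in>J0. (if snd (\<omega> i) \<in> S then 1 else 0)) - N * pS)"
      by (simp add: sum_distrib_left[symmetric] sum_subtractf cJ0)
    also have "(\<Sum>i\<in>J0. (if snd (\<omega> i) \<in> S then 1 else 0::real)) = real cnt"
    proof -
      have "(\<Sum>i\<in>J0. (if snd (\<omega> i) \<in> S then 1 else 0::real)) = (\<Sum>i\<in>{i\<in>J0. snd (\<omega> i) \<in> S}. 1)"
        using fJ0 sum.inter_filter[of J0 "\<lambda>_. 1::real" "\<lambda>i. snd (\<omega> i) \<in> S"] by simp
      also have "{i\<in>J0. snd (\<omega> i) \<in> S} = {i\<in>{1..n}. snd (\<omega> i) \<in> S \<and> g (fst (\<omega> i)) = m}"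
        unfolding J0_def by auto
      finally show ?thesis unfolding cnt_def by simp
    qed
    finally have pr: "(\<Prod>i\<in>{1..n}. (if i \<in> J0 then a J0 else b) (\<omega> i)) = exp (lam N * (real cnt - N * pS))" .
    have "tm J0 \<omega> = exp (lam N * (real cnt - N * pS - sqrt (N * L / 2)))"
      unfolding tm_def pr cJ0 by (simp add: exp_add[symmetric] algebra_simps)
    also have "\<dots> \<ge> 1" using ineq lam_nn[of N] by simp
    finally have "1 \<le> tm J0 \<omega>" .
    also have "tm J0 \<omega> \<le> F \<omega>" unfolding F_def
      using J0in tm_nn by (intro member_le_sum) auto
    finally show ?thesis .
  qed
  have "measure Q E = integral\<^sup>L Q (indicator E)"
    using Esets by (simp add: Int_absorb2 sets.sets_into_space)
  also have "\<dots> \<le> integral\<^sup>L Q F"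
  proof (rule integral_mono)
    show "integrable Q (indicator E :: _ \<Rightarrow> real)"
      using Esets QQ.emeasure_finite[of E] by (intro integrable_real_indicator) (auto simp: top.not_eq_extremum)
    show "integrable Q F" by (rule F_int)
    show "indicator E \<omega> \<le> F \<omega>" if "\<omega> \<in> space Q" for \<omega>
      using pw F_nn by (auto simp: indicator_def)
  qed
  also have "integral\<^sup>L Q F = (\<Sum>J\<in>Pow {1..n} - {{}}. exp (- lam (card J) * sqrt (card J * L / 2)) * (integral\<^sup>L P (a J)) ^ card J * (integral\<^sup>L P b) ^ (n - card J))"
    unfolding F_def[abs_def]
  proof (subst Bochner_Integration.integral_sum)
    show "\<And>J. J \<in> Pow {1..n} - {{}} \<Longrightarrow> integrable Q (tm J)" by (rule tm_int)
    show "(\<Sum>J\<in>Pow {1..n} - {{}}. integral\<^sup>L Q (tm J)) = (\<Sum>J\<in>Pow {1..n} - {{}}. exp (- lam (card J) * sqrt (card J * L / 2)) * (integral\<^sup>L P (a J)) ^ card J * (integral\<^sup>L P b) ^ (n - card J))"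
    proof (intro sum.cong refl)
      fix J assume J: "J \<in> Pow {1..n} - {{}}"
      show "integral\<^sup>L Q (tm J) = exp (- lam (card J) * sqrt (card J * L / 2)) * (integral\<^sup>L P (a J)) ^ card J * (integral\<^sup>L P b) ^ (n - card J)"
      proof -
        have Jsub: "J \<subseteq> {1..n}" using J by auto
        have ia: "integrable P (a J)" unfolding a_def by (rule aF_int)
        have ib: "integrable P b" unfolding b_def by (rule bF_int)
        have "(\<integral>\<omega>. (\<Prod>i\<in>{1..n}. (if i \<in> J then a J else b) (\<omega> i)) \<partial>Q) = (integral\<^sup>L P (a J)) ^ card J * (integral\<^sup>L P b) ^ (n - card J)"
          by (rule INT[OF ia ib Jsub])
        then show ?thesis unfolding tm_def[abs_def] by simp
      qed
    qed
  qed
  also have "\<dots> \<le> (\<Sum>J\<in>Pow {1..n} - {{}}. exp (- L) * (q ^ card J * (1 - q) ^ (n - card J)))"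
  proof (intro sum_mono)
    fix J assume J: "J \<in> Pow {1..n} - {{}}"
    then have kpos: "card J > 0" by (auto simp: card_gt_0_iff finite_subset)
    have ia: "integral\<^sup>L P (a J) = q * (pS * exp (lam (card J) * (1 - pS)) + (1 - pS) * exp (- lam (card J) * pS))"
      unfolding a_def int_a q_def[symmetric] r_def[symmetric] r_eq by (simp add: algebra_simps)
    have ia_nn: "0 \<le> integral\<^sup>L P (a J)" unfolding ia using qpos pS01 by simp
    have ia_le: "integral\<^sup>L P (a J) \<le> q * exp ((lam (card J))\<^sup>2 / 8)"
      unfolding ia using hoeff_bern[OF pS01 lam_nn] qpos by simp
    have ib: "integral\<^sup>L P b = 1 - q" unfolding b_def int_b q_def ..
    have "exp (- lam (card J) * sqrt (card J * L / 2)) * (integral\<^sup>L P (a J)) ^ card J * (integral\<^sup>L P b) ^ (n - card J)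
      \<le> exp (- lam (card J) * sqrt (card J * L / 2)) * (q * exp ((lam (card J))\<^sup>2 / 8)) ^ card J * (1 - q) ^ (n - card J)"
      unfolding ib using ia_nn ia_le q_le by (intro mult_right_mono mult_left_mono power_mono) auto
    also have "\<dots> = exp (- L) * (q ^ card J * (1 - q) ^ (n - card J))"
      unfolding lam_def using exp_arith[OF kpos L, of q] qpos by simp
    finally show "exp (- lam (card J) * sqrt (card J * L / 2)) * (integral\<^sup>L P (a J)) ^ card J * (integral\<^sup>L P b) ^ (n - card J)
      \<le> exp (- L) * (q ^ card J * (1 - q) ^ (n - card J))" .
  qed
  also have "\<dots> = exp (- L) * (\<Sum>J\<in>Pow {1..n} - {{}}. q ^ card J * (1 - q) ^ (n - card J))"
    by (simp add: sum_distrib_left)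
  also have "\<dots> \<le> exp (- L) * (\<Sum>J\<in>Pow {1..n}. q ^ card J * (1 - q) ^ (n - card J))"
    using qpos q_le by (intro mult_left_mono sum_mono2) auto
  also have "(\<Sum>J\<in>Pow {1..n}. q ^ card J * (1 - q) ^ (n - card J)) = (\<Prod>i\<in>{1..n}. q + (1 - q))"
  proof -
    have "(\<Prod>i\<in>{1..n}. q + (1 - q)) = (\<Sum>X\<in>Pow {1..n}. (\<Prod>i\<in>X. q) * (\<Prod>i\<in>{1..n} - X. 1 - q))"
      by (rule prod_add) simp
    also have "\<dots> = (\<Sum>J\<in>Pow {1..n}. q ^ card J * (1 - q) ^ (n - card J))"
      by (intro sum.cong refl) (auto simp: card_Diff_subset finite_subset)
    finally show ?thesis by simp
  qed
  finally show ?thesis unfolding E_def by simp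
qed


end


context calib begin
lemma omega_snd: "\<omega> \<in> space Q \<Longrightarrow> i \<in> {1..n} \<Longrightarrow> snd (\<omega> i) \<in> {1..K}"
proof -
  assume "\<omega> \<in> space Q" "i \<in> {1..n}"
  then have "\<omega> i \<in> space P" unfolding space_PiM by (rule PiE_mem)
  then show ?thesis using spaceP by auto
qed

lemma sum_pi_hat:
  assumes "T \<subseteq> {1..K}"
  shows "(\<Sum>y\<in>T. pi_hat g K n \<omega> m y) = real (card {i\<in>{1..n}. snd (\<omega> i) \<in> T \<and> g (fst (\<omega> i)) = m}) / real (bin_count g n \<omega> m)"
proof -
  have fT: "finite T" using assms finite_subset by blast
  have "(\<Sum>y\<in>T. pi_hat g K n \<omega> m y) = (\<Sum>y\<in>T. real (card {i\<in>{1..n}. snd (\<omega> i) = y \<and> g (fst (\<omega> i)) = m}) / real (bin_count g n \<omega> m))"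
    using assms by (intro sum.cong refl) (auto simp: pi_hat_def)
  also have "\<dots> = real (\<Sum>y\<in>T. card {i\<in>{1..n}. snd (\<omega> i) = y \<and> g (fst (\<omega> i)) = m}) / real (bin_count g n \<omega> m)"
    by (simp add: sum_divide_distrib)
  also have "(\<Sum>y\<in>T. card {i\<in>{1..n}. snd (\<omega> i) = y \<and> g (fst (\<omega> i)) = m}) = card (\<Union>y\<in>T. {i\<in>{1..n}. snd (\<omega> i) = y \<and> g (fst (\<omega> i)) = m})"
    by (rule card_UN_disjoint[symmetric]) (auto simp: fT)
  also have "(\<Union>y\<in>T. {i\<in>{1..n}. snd (\<omega> i) = y \<and> g (fst (\<omega> i)) = m}) = {i\<in>{1..n}. snd (\<omega> i) \<in> T \<and> g (fst (\<omega> i)) = m}"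
    by auto
  finally show ?thesis .
qed

lemma sum_pi_true:
  assumes "T \<subseteq> {1..K}"
  shows "(\<Sum>y\<in>T. pi_true P g K m y) = measure P {p\<in>space P. snd p \<in> T \<and> g (fst p) = m} / measure P {p\<in>space P. g (fst p) = m}"
proof -
  have fT: "finite T" using assms finite_subset by blast
  have "(\<Sum>y\<in>T. pi_true P g K m y) = (\<Sum>y\<in>T. measure P {p\<in>space P. snd p = y \<and> g (fst p) = m} / measure P {p\<in>space P. g (fst p) = m})"
    using assms by (intro sum.cong refl) (auto simp: pi_true_def)
  also have "\<dots> = (\<Sum>y\<in>T. measure P {p\<in>space P. snd p = y \<and> g (fst p) = m}) / measure P {p\<in>space P. g (fst p) = m}"
    by (simp add: sum_divide_distrib)
  also have "(\<Sum>y\<in>T. measure P {p\<in>space P. snd p = y \<and> g (fst p) = m}) = measure P {p\<in>space P. snd p \<in> T \<and> g (fst p) = m}"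
    using Pmeas_sum[OF fT, of snd "\<lambda>v. fst v = m"] by (simp add: G_def)
  finally show ?thesis .
qed

lemma D1:
  fixes L :: real
  assumes om: "\<omega> \<in> space Q" and Npos: "bin_count g n \<omega> m > 0"
    and qpos: "measure P {p\<in>space P. g (fst p) = m} > 0" and L: "L \<ge> 0"
    and H: "\<forall>S\<in>Pow {1..K}. \<not> (sqrt (real (bin_count g n \<omega> m) * L / 2) \<le> real (card {i\<in>{1..n}. snd (\<omega> i) \<in> S \<and> g (fst (\<omega> i)) = m})
        - real (bin_count g n \<omega> m) * (measure P {p\<in>space P. snd p \<in> S \<and> g (fst p) = m} / measure P {p\<in>space P. g (fst p) = m}))"
  shows "l1dist K (pi_hat g K n \<omega> m) (pi_true P g K m) \<le> 2 / sqrt (real (bin_count g n \<omega> m)) * sqrt (1/2 * L)"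
proof -
  define N where "N = bin_count g n \<omega> m"
  define q where "q = measure P {p\<in>space P. g (fst p) = m}"
  define u where "u = pi_hat g K n \<omega> m"
  define v where "v = pi_true P g K m"
  define S where "S = {y\<in>{1..K}. v y \<le> u y}"
  have SK: "S \<subseteq> {1..K}" unfolding S_def by auto
  have Npos': "real N > 0" by (simp add: N_def Npos)
  have cK: "card {i\<in>{1..n}. snd (\<omega> i) \<in> {1..K} \<and> g (fst (\<omega> i)) = m} = N"
    unfolding N_def bin_count_def using omega_snd[OF om] by (intro arg_cong[where f=card]) auto
  have mK: "measure P {p\<in>space P. snd p \<in> {1..K} \<and> g (fst p) = m} = q"
    unfolding q_def using spaceP by (intro arg_cong[where f="measure P"]) auto
  have su: "(\<Sum>y\<in>{1..K}. u y) = 1"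
    unfolding u_def sum_pi_hat[OF order_refl] cK N_def[symmetric] using Npos' by simp
  have sv: "(\<Sum>y\<in>{1..K}. v y) = 1"
    unfolding v_def sum_pi_true[OF order_refl] mK q_def[symmetric] using qpos q_def by simp
  have split1: "(\<Sum>y\<in>{1..K}. f y) = (\<Sum>y\<in>S. f y) + (\<Sum>y\<in>{1..K} - S. f y)" for f :: "nat \<Rightarrow> real"
    using SK by (metis add.commute finite_atLeastAtMost sum.subset_diff)
  have "l1dist K u v = (\<Sum>y\<in>S. u y - v y) + (\<Sum>y\<in>{1..K} - S. v y - u y)"
    unfolding l1dist_def split1[of "\<lambda>y. \<bar>u y - v y\<bar>"]
    by (intro arg_cong2[where f="(+)"] sum.cong refl) (auto simp: S_def)
  moreover have "(\<Sum>y\<in>{1..K}. u y - v y) = 0" using su sv by (simp add: sum_subtractf)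
  then have "(\<Sum>y\<in>{1..K} - S. v y - u y) = (\<Sum>y\<in>S. u y - v y)"
    unfolding split1 by (simp add: sum_subtractf)
  ultimately have l1: "l1dist K u v = 2 * ((\<Sum>y\<in>S. u y) - (\<Sum>y\<in>S. v y))"
    by (simp add: sum_subtractf)
  have HS: "real (card {i\<in>{1..n}. snd (\<omega> i) \<in> S \<and> g (fst (\<omega> i)) = m}) - real N * (measure P {p\<in>space P. snd p \<in> S \<and> g (fst p) = m} / q)
      < sqrt (real N * L / 2)"
  proof -
    have "S \<in> Pow {1..K}" using SK by simp
    then have HS0: "\<not> (sqrt (real (bin_count g n \<omega> m) * L / 2) \<le> real (card {i\<in>{1..n}. snd (\<omega> i) \<in> S \<and> g (fst (\<omega> i)) = m})
        - real (bin_count g n \<omega> m) * (measure P {p\<in>space P. snd p \<in> S \<and> g (fst p) = m} / measure P {p\<in>space P. g (fst p) = m}))"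
      using H by blast
    show ?thesis using HS0 unfolding N_def q_def not_le .
  qed
  have "(\<Sum>y\<in>S. u y) - (\<Sum>y\<in>S. v y) = (real (card {i\<in>{1..n}. snd (\<omega> i) \<in> S \<and> g (fst (\<omega> i)) = m}) - real N * (measure P {p\<in>space P. snd p \<in> S \<and> g (fst p) = m} / q)) / real N"
    unfolding u_def v_def sum_pi_hat[OF SK] sum_pi_true[OF SK] N_def[symmetric] q_def[symmetric]
    using Npos' by (simp add: field_simps)
  also have "\<dots> \<le> sqrt (real N * L / 2) / real N"
    using HS Npos' by (intro divide_right_mono) auto
  finally have "l1dist K u v \<le> 2 * (sqrt (real N * L / 2) / real N)" unfolding l1 by simp
  also have "2 * (sqrt (real N * L / 2) / real N) = 2 / sqrt (real N) * sqrt (1/2 * L)"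
  proof -
    have "sqrt (real N * L / 2) = sqrt (real N) * sqrt (1/2 * L)"
      by (simp add: real_sqrt_mult[symmetric])
    moreover have "real N = sqrt (real N) * sqrt (real N)" using Npos' by simp
    ultimately show ?thesis using Npos' by (simp add: field_simps)
  qed
  finally show ?thesis unfolding u_def v_def N_def .
qed


lemma D2:
  assumes om: "\<omega> \<in> space Q"
    and allpos: "\<forall>m\<in>{1..M}. measure P {p\<in>space P. g (fst p) = m} > 0 \<and>
        l1dist K (pi_hat g K n \<omega> m) (pi_true P g K m) \<le> e m"
    and z: "z \<in> recal g K n \<omega> ` space MX"
  shows "(\<Sum>y=1..K. \<bar>measure P {p\<in>space P. snd p = y \<and> recal g K n \<omega> (fst p) = z}
                        / measure P {p\<in>space P. recal g K n \<omega> (fst p) = z} - z y\<bar>)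
            \<le> Max (e ` {1..M})"
proof -
  interpret P: prob_space P by (rule P)
  define qm where "qm m = measure P {p\<in>space P. g (fst p) = m}" for m
  define u where "u m = pi_hat g K n \<omega> m" for m
  define v where "v m = pi_true P g K m" for m
  obtain x where x: "x \<in> space MX" "z = u (g x)" using z unfolding recal_def u_def by auto
  define T where "T = {m\<in>{1..M}. u m = z}"
  have m0: "g x \<in> T" using x g_range unfolding T_def by auto
  have fT: "finite T" unfolding T_def by simp
  have TM: "T \<subseteq> {1..M}" unfolding T_def by auto
  have fstP: "p \<in> space P \<Longrightarrow> fst p \<in> space MX" for p using spaceP by auto
  have rec_eq: "recal g K n \<omega> (fst p) = z \<longleftrightarrow> g (fst p) \<in> T" if "p \<in> space P" for p
    using g_range[OF fstP[OF that]] unfolding T_def recal_def u_def by auto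
  define den where "den = measure P {p\<in>space P. recal g K n \<omega> (fst p) = z}"
  have den_eq: "den = (\<Sum>m\<in>T. qm m)"
  proof -
    have "den = measure P {p\<in>space P. g (fst p) \<in> T}"
      unfolding den_def using rec_eq by (intro arg_cong[where f="measure P"]) auto
    also have "\<dots> = (\<Sum>m\<in>T. qm m)"
      using Pmeas_sum[OF fT, of fst "\<lambda>_. True"] by (simp add: G_def qm_def)
    finally show ?thesis .
  qed
  have qm_pos: "m \<in> T \<Longrightarrow> qm m > 0" for m using allpos TM unfolding qm_def by auto
  have den_pos: "den > 0" unfolding den_eq
    using qm_pos m0 fT by (intro sum_pos2[of T "g x"]) (auto intro: less_imp_le)
  have num_eq: "measure P {p\<in>space P. snd p = y \<and> recal g K n \<omega> (fst p) = z} = (\<Sum>m\<in>T. qm m * v m y)"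
    if y: "y \<in> {1..K}" for y
  proof -
    have "measure P {p\<in>space P. snd p = y \<and> recal g K n \<omega> (fst p) = z} = measure P {p\<in>space P. g (fst p) \<in> T \<and> snd p = y}"
      using rec_eq by (intro arg_cong[where f="measure P"]) auto
    also have "\<dots> = (\<Sum>m\<in>T. measure P {p\<in>space P. g (fst p) = m \<and> snd p = y})"
      using Pmeas_sum[OF fT, of fst "\<lambda>v. snd v = y"] by (simp add: G_def)
    also have "\<dots> = (\<Sum>m\<in>T. qm m * v m y)"
    proof (intro sum.cong refl)
      fix m assume "m \<in> T"
      then have "qm m > 0" by (rule qm_pos)
      moreover have "{p\<in>space P. g (fst p) = m \<and> snd p = y} = {p\<in>space P. snd p = y \<and> g (fst p) = m}" by auto
      ultimately show "measure P {p\<in>space P. g (fst p) = m \<and> snd p = y} = qm m * v m y"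
        using y unfolding v_def pi_true_def qm_def by simp
    qed
    finally show ?thesis .
  qed
  have wsum: "(\<Sum>m\<in>T. qm m / den) = 1" using den_pos unfolding den_eq by (simp add: sum_divide_distrib[symmetric])
  have uz: "m \<in> T \<Longrightarrow> u m = z" for m unfolding T_def by auto
  have "(\<Sum>y=1..K. \<bar>measure P {p\<in>space P. snd p = y \<and> recal g K n \<omega> (fst p) = z} / den - z y\<bar>)
      = (\<Sum>y=1..K. \<bar>\<Sum>m\<in>T. qm m / den * (v m y - u m y)\<bar>)"
  proof (intro sum.cong refl arg_cong[where f=abs])
    fix y assume y: "y \<in> {1..K}"
    have "(\<Sum>m\<in>T. qm m / den * (v m y - u m y)) = (\<Sum>m\<in>T. qm m * v m y / den - qm m / den * z y)"
      by (intro sum.cong refl) (simp add: uz right_diff_distrib)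
    also have "\<dots> = (\<Sum>m\<in>T. qm m * v m y / den) - (\<Sum>m\<in>T. qm m / den * z y)"
      by (simp add: sum_subtractf)
    also have "\<dots> = (\<Sum>m\<in>T. qm m * v m y) / den - (\<Sum>m\<in>T. qm m / den) * z y"
      by (simp add: sum_divide_distrib sum_distrib_right)
    finally have "(\<Sum>m\<in>T. qm m / den * (v m y - u m y)) = (\<Sum>m\<in>T. qm m * v m y) / den - (\<Sum>m\<in>T. qm m / den) * z y" .
    then show "measure P {p\<in>space P. snd p = y \<and> recal g K n \<omega> (fst p) = z} / den - z y = (\<Sum>m\<in>T. qm m / den * (v m y - u m y))"
      unfolding num_eq[OF y] wsum by simp
  qed
  also have "\<dots> \<le> (\<Sum>y=1..K. \<Sum>m\<in>T. qm m / den * \<bar>u m y - v m y\<bar>)"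
  proof (intro sum_mono)
    fix y
    have "\<bar>\<Sum>m\<in>T. qm m / den * (v m y - u m y)\<bar> \<le> (\<Sum>m\<in>T. \<bar>qm m / den * (v m y - u m y)\<bar>)" by (rule sum_abs)
    also have "\<dots> = (\<Sum>m\<in>T. qm m / den * \<bar>u m y - v m y\<bar>)"
    proof (intro sum.cong refl)
      fix m assume m: "m \<in> T"
      have "\<bar>qm m / den\<bar> = qm m / den" using qm_pos[OF m] den_pos by simp
      moreover have "\<bar>v m y - u m y\<bar> = \<bar>u m y - v m y\<bar>" by (rule abs_minus_commute)
      ultimately show "\<bar>qm m / den * (v m y - u m y)\<bar> = qm m / den * \<bar>u m y - v m y\<bar>"
        by (simp only: abs_mult)
    qed
    finally show "\<bar>\<Sum>m\<in>T. qm m / den * (v m y - u m y)\<bar> \<le> (\<Sum>m\<in>T. qm m / den * \<bar>u m y - v m y\<bar>)" .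
  qed
  also have "\<dots> = (\<Sum>m\<in>T. qm m / den * l1dist K (u m) (v m))"
    unfolding l1dist_def by (subst sum.swap) (simp add: sum_distrib_left)
  also have "\<dots> \<le> (\<Sum>m\<in>T. qm m / den * Max (e ` {1..M}))"
  proof (intro sum_mono mult_left_mono)
    fix m assume m: "m \<in> T"
    then have "l1dist K (u m) (v m) \<le> e m" using allpos TM unfolding u_def v_def by auto
    also have "e m \<le> Max (e ` {1..M})" using m TM by (intro Max_ge) auto
    finally show "l1dist K (u m) (v m) \<le> Max (e ` {1..M})" .
    show "0 \<le> qm m / den" using qm_pos[OF m] den_pos by simp
  qed
  also have "\<dots> = Max (e ` {1..M})" by (simp only: sum_distrib_right[symmetric] wsum mult_1)
  finally show ?thesis unfolding den_def .
qed

end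


context calib begin

lemma Eset: "{\<omega>\<in>space Q. bin_count g n \<omega> m > 0 \<and>
     sqrt (real (bin_count g n \<omega> m) * L / 2) \<le> real (card {i\<in>{1..n}. snd (\<omega> i) \<in> S \<and> g (fst (\<omega> i)) = m}) - real (bin_count g n \<omega> m) * c} \<in> sets Q"
proof (rule setQ)
  fix \<omega> \<omega>' assume h: "psi \<omega> = psi \<omega>'"
  have "{i\<in>{1..n}. snd (\<omega> i) \<in> S \<and> g (fst (\<omega> i)) = m} = {i\<in>{1..n}. snd (\<omega>' i) \<in> S \<and> g (fst (\<omega>' i)) = m}"
    using psi_eqD[OF h] by auto
  then show "0 < bin_count g n \<omega> m \<and> sqrt (real (bin_count g n \<omega> m) * L / 2) \<le> real (card {i\<in>{1..n}. snd (\<omega> i) \<in> S \<and> g (fst (\<omega> i)) = m}) - real (bin_count g n \<omega> m) * c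
    \<Longrightarrow> 0 < bin_count g n \<omega>' m \<and> sqrt (real (bin_count g n \<omega>' m) * L / 2) \<le> real (card {i\<in>{1..n}. snd (\<omega>' i) \<in> S \<and> g (fst (\<omega>' i)) = m}) - real (bin_count g n \<omega>' m) * c"
    using bin_count_inv[OF h] by simp
qed

lemma Nset: "{\<omega>\<in>space Q. bin_count g n \<omega> m > 0} \<in> sets Q"
proof (rule setQ)
  fix \<omega> \<omega>' assume h: "psi \<omega> = psi \<omega>'"
  show "0 < bin_count g n \<omega> m \<Longrightarrow> 0 < bin_count g n \<omega>' m" using bin_count_inv[OF h] by simp
qed

lemma null_bin:
  assumes "measure P {p\<in>space P. g (fst p) = m} = 0"
  shows "measure Q {\<omega>\<in>space Q. bin_count g n \<omega> m > 0} = 0"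
proof -
  interpret P: prob_space P by (rule P)
  interpret QQ: prob_space Q by (rule probQ)
  have "emeasure P {p\<in>space P. g (fst p) = m} = 0" using assms P.emeasure_eq_measure by simp
  then have ae: "AE p in P. g (fst p) \<noteq> m"
    by (subst AE_iff_measurable[OF setBm]) auto
  have "AE \<omega> in Q. g (fst (\<omega> i)) \<noteq> m" if "i \<in> {1..n}" for i
    using AE_PiM_component[of "{1..n}" "\<lambda>_. P" i "\<lambda>p. g (fst p) \<noteq> m"] P that ae by simp
  then have "AE \<omega> in Q. \<forall>i\<in>{1..n}. g (fst (\<omega> i)) \<noteq> m"
    by (intro eventually_ball_finite) auto
  then have "AE \<omega> in Q. \<not> bin_count g n \<omega> m > 0"
    by (rule eventually_mono) (simp add: bin_count_def)
  then have "emeasure Q {\<omega>\<in>space Q. bin_count g n \<omega> m > 0} = 0"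
    by (subst (asm) AE_iff_measurable[OF Nset]) auto
  then show ?thesis by (simp add: measure_def)
qed


lemma final:
  shows
   "measure (PiM {1..n} (\<lambda>_. P))
      {\<omega> \<in> space (PiM {1..n} (\<lambda>_. P)).
         \<forall>m\<in>{1..M}. bin_count g n \<omega> m > 0 \<longrightarrow>
           l1dist K (pi_hat g K n \<omega> m) (pi_true P g K m) \<le> eps M K \<alpha> (bin_count g n \<omega> m)}
      \<ge> 1 - \<alpha>
  \<and> measure (PiM {1..n} (\<lambda>_. P))
      {\<omega> \<in> space (PiM {1..n} (\<lambda>_. P)).
         (\<forall>m\<in>{1..M}. bin_count g n \<omega> m > 0) \<longrightarrow>
         (\<forall>z\<in>recal g K n \<omega> ` space MX.
            (\<Sum>y=1..K. \<bar>measure P {p\<in>space P. snd p = y \<and> recal g K n \<omega> (fst p) = z}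
                        / measure P {p\<in>space P. recal g K n \<omega> (fst p) = z} - z y\<bar>)
            \<le> Max ((\<lambda>m. eps M K \<alpha> (bin_count g n \<omega> m)) ` {1..M}))}
      \<ge> 1 - \<alpha>"
proof -
  interpret P: prob_space P by (rule P)
  interpret QQ: prob_space Q by (rule probQ)
  define c where "c = real M * 2 ^ K / \<alpha>"
  define L where "L = ln c"
  have c1: "c > 1"
  proof -
    have "(1::real) \<le> real M" using Mpos by simp
    moreover have "(1::real) \<le> 2 ^ K" by simp
    ultimately have "1 \<le> real M * 2 ^ K" using mult_mono[of 1 "real M" 1 "2 ^ K"] by simp
    then have "\<alpha> < real M * 2 ^ K" using alpha by linarith
    then show ?thesis unfolding c_def using alpha by (simp add: less_divide_eq)
  qed
  have L0: "L \<ge> 0" unfolding L_def using c1 by simp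
  have expL: "exp (- L) = \<alpha> / (real M * 2 ^ K)"
    unfolding L_def using c1 by (simp add: exp_minus c_def)
  define qm where "qm m = measure P {p\<in>space P. g (fst p) = m}" for m
  define E where "E m S = {\<omega>\<in>space Q. bin_count g n \<omega> m > 0 \<and>
     sqrt (real (bin_count g n \<omega> m) * L / 2) \<le> real (card {i\<in>{1..n}. snd (\<omega> i) \<in> S \<and> g (fst (\<omega> i)) = m})
       - real (bin_count g n \<omega> m) * (measure P {p\<in>space P. snd p \<in> S \<and> g (fst p) = m} / qm m)}" for m S
  define Bad where "Bad m = (if qm m = 0 then {\<omega>\<in>space Q. bin_count g n \<omega> m > 0} else (\<Union>S\<in>Pow {1..K}. E m S))" for m
  have E_sets: "E m S \<in> sets Q" for m S unfolding E_def by (rule Eset)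
  have Bad_sets: "Bad m \<in> sets Q" for m
    unfolding Bad_def using E_sets Nset by (auto intro!: sets.finite_UN)
  have Bad_le: "measure Q (Bad m) \<le> 2 ^ K * exp (- L)" for m
  proof (cases "qm m = 0")
    case True
    then show ?thesis unfolding Bad_def using null_bin[of m] by (simp add: qm_def)
  next
    case False
    then have qpos: "qm m > 0" unfolding qm_def using measure_nonneg[of P] by (simp add: less_le)
    have "measure Q (Bad m) = measure Q (\<Union>S\<in>Pow {1..K}. E m S)" unfolding Bad_def using False by simp
    also have "\<dots> \<le> (\<Sum>S\<in>Pow {1..K}. measure Q (E m S))"
      by (rule measure_UNION_le[OF _ E_sets]) simp
    also have "\<dots> \<le> (\<Sum>S\<in>Pow {1..K}. exp (- L))"
    proof (rule sum_mono)
      fix S assume "S \<in> Pow {1..K}"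
      show "measure Q (E m S) \<le> exp (- L)"
        unfolding E_def using main[of m L S] qpos L0 unfolding qm_def by simp
    qed
    also have "\<dots> = 2 ^ K * exp (- L)" by (simp add: card_Pow)
    finally show ?thesis .
  qed
  define BadU where "BadU = (\<Union>m\<in>{1..M}. Bad m)"
  have BadU_sets: "BadU \<in> sets Q" unfolding BadU_def using Bad_sets by auto
  have BadU_le: "measure Q BadU \<le> \<alpha>"
  proof -
    have "measure Q BadU \<le> (\<Sum>m\<in>{1..M}. measure Q (Bad m))"
      unfolding BadU_def by (rule measure_UNION_le[OF _ Bad_sets]) simp
    also have "\<dots> \<le> (\<Sum>m\<in>{1..M}. 2 ^ K * exp (- L))" by (rule sum_mono) (rule Bad_le)
    also have "\<dots> = \<alpha>" using Mpos unfolding expL by simp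
    finally show ?thesis .
  qed
  have compl: "measure Q (space Q - BadU) \<ge> 1 - \<alpha>"
    using QQ.prob_compl[OF BadU_sets] BadU_le by simp
  have good: "qm m > 0 \<and> l1dist K (pi_hat g K n \<omega> m) (pi_true P g K m) \<le> eps M K \<alpha> (bin_count g n \<omega> m)"
    if om: "\<omega> \<in> space Q - BadU" and m: "m \<in> {1..M}" and Npos: "bin_count g n \<omega> m > 0" for \<omega> m
  proof -
    have nb: "\<omega> \<notin> Bad m" using om m unfolding BadU_def by auto
    have qne: "qm m \<noteq> 0" using nb om Npos unfolding Bad_def by auto
    then have qpos: "qm m > 0" unfolding qm_def using measure_nonneg[of P] by (simp add: less_le)
    have nE: "\<forall>S\<in>Pow {1..K}. \<omega> \<notin> E m S" using nb qne unfolding Bad_def by auto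
    have H: "\<forall>S\<in>Pow {1..K}. \<not> (sqrt (real (bin_count g n \<omega> m) * L / 2) \<le> real (card {i\<in>{1..n}. snd (\<omega> i) \<in> S \<and> g (fst (\<omega> i)) = m})
        - real (bin_count g n \<omega> m) * (measure P {p\<in>space P. snd p \<in> S \<and> g (fst p) = m} / measure P {p\<in>space P. g (fst p) = m}))"
      using nE om Npos unfolding E_def qm_def by auto
    have "l1dist K (pi_hat g K n \<omega> m) (pi_true P g K m) \<le> 2 / sqrt (real (bin_count g n \<omega> m)) * sqrt (1/2 * L)"
      using D1[of \<omega> m L] om Npos qpos L0 H unfolding qm_def by auto
    then show ?thesis using qpos unfolding eps_def L_def c_def by simp
  qed
  have G1: "{\<omega> \<in> space Q. \<forall>m\<in>{1..M}. bin_count g n \<omega> m > 0 \<longrightarrow>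
           l1dist K (pi_hat g K n \<omega> m) (pi_true P g K m) \<le> eps M K \<alpha> (bin_count g n \<omega> m)} \<in> sets Q"
  proof (rule setQ)
    fix \<omega> \<omega>' assume h: "psi \<omega> = psi \<omega>'"
    show "\<forall>m\<in>{1..M}. bin_count g n \<omega> m > 0 \<longrightarrow> l1dist K (pi_hat g K n \<omega> m) (pi_true P g K m) \<le> eps M K \<alpha> (bin_count g n \<omega> m)
      \<Longrightarrow> \<forall>m\<in>{1..M}. bin_count g n \<omega>' m > 0 \<longrightarrow> l1dist K (pi_hat g K n \<omega>' m) (pi_true P g K m) \<le> eps M K \<alpha> (bin_count g n \<omega>' m)"
      using bin_count_inv[OF h] pi_hat_inv[OF h] by simp
  qed
  have G2: "{\<omega> \<in> space Q.
         (\<forall>m\<in>{1..M}. bin_count g n \<omega> m > 0) \<longrightarrow>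
         (\<forall>z\<in>recal g K n \<omega> ` space MX.
            (\<Sum>y=1..K. \<bar>measure P {p\<in>space P. snd p = y \<and> recal g K n \<omega> (fst p) = z}
                        / measure P {p\<in>space P. recal g K n \<omega> (fst p) = z} - z y\<bar>)
            \<le> Max ((\<lambda>m. eps M K \<alpha> (bin_count g n \<omega> m)) ` {1..M}))} \<in> sets Q"
  proof (rule setQ)
    fix \<omega> \<omega>' assume h: "psi \<omega> = psi \<omega>'"
    show "(\<forall>m\<in>{1..M}. bin_count g n \<omega> m > 0) \<longrightarrow>
         (\<forall>z\<in>recal g K n \<omega> ` space MX.
            (\<Sum>y=1..K. \<bar>measure P {p\<in>space P. snd p = y \<and> recal g K n \<omega> (fst p) = z}
                        / measure P {p\<in>space P. recal g K n \<omega> (fst p) = z} - z y\<bar>)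
            \<le> Max ((\<lambda>m. eps M K \<alpha> (bin_count g n \<omega> m)) ` {1..M}))
      \<Longrightarrow> (\<forall>m\<in>{1..M}. bin_count g n \<omega>' m > 0) \<longrightarrow>
         (\<forall>z\<in>recal g K n \<omega>' ` space MX.
            (\<Sum>y=1..K. \<bar>measure P {p\<in>space P. snd p = y \<and> recal g K n \<omega>' (fst p) = z}
                        / measure P {p\<in>space P. recal g K n \<omega>' (fst p) = z} - z y\<bar>)
            \<le> Max ((\<lambda>m. eps M K \<alpha> (bin_count g n \<omega>' m)) ` {1..M}))"
      using bin_count_inv[OF h] recal_inv[OF h] by simp
  qed
  have sub1: "space Q - BadU \<subseteq> {\<omega> \<in> space Q. \<forall>m\<in>{1..M}. bin_count g n \<omega> m > 0 \<longrightarrow>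
           l1dist K (pi_hat g K n \<omega> m) (pi_true P g K m) \<le> eps M K \<alpha> (bin_count g n \<omega> m)}"
    using good by auto
  have sub2: "space Q - BadU \<subseteq> {\<omega> \<in> space Q.
         (\<forall>m\<in>{1..M}. bin_count g n \<omega> m > 0) \<longrightarrow>
         (\<forall>z\<in>recal g K n \<omega> ` space MX.
            (\<Sum>y=1..K. \<bar>measure P {p\<in>space P. snd p = y \<and> recal g K n \<omega> (fst p) = z}
                        / measure P {p\<in>space P. recal g K n \<omega> (fst p) = z} - z y\<bar>)
            \<le> Max ((\<lambda>m. eps M K \<alpha> (bin_count g n \<omega> m)) ` {1..M}))}"
  proof (intro subsetI CollectI conjI impI ballI)
    fix \<omega> assume om: "\<omega> \<in> space Q - BadU"
    then show "\<omega> \<in> space Q" by simp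
    fix z assume all: "\<forall>m\<in>{1..M}. bin_count g n \<omega> m > 0" and z: "z \<in> recal g K n \<omega> ` space MX"
    show "(\<Sum>y=1..K. \<bar>measure P {p\<in>space P. snd p = y \<and> recal g K n \<omega> (fst p) = z}
                        / measure P {p\<in>space P. recal g K n \<omega> (fst p) = z} - z y\<bar>)
            \<le> Max ((\<lambda>m. eps M K \<alpha> (bin_count g n \<omega> m)) ` {1..M})"
    proof (rule D2[OF _ _ z])
      show "\<omega> \<in> space Q" using om by simp
      show "\<forall>m\<in>{1..M}. 0 < measure P {p \<in> space P. g (fst p) = m} \<and>
          l1dist K (pi_hat g K n \<omega> m) (pi_true P g K m) \<le> eps M K \<alpha> (bin_count g n \<omega> m)"
        using good[OF om] all unfolding qm_def by blast
    qed
  qed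
  have "measure Q (space Q - BadU) \<le> measure Q {\<omega> \<in> space Q. \<forall>m\<in>{1..M}. bin_count g n \<omega> m > 0 \<longrightarrow>
           l1dist K (pi_hat g K n \<omega> m) (pi_true P g K m) \<le> eps M K \<alpha> (bin_count g n \<omega> m)}"
    by (rule QQ.finite_measure_mono[OF sub1 G1])
  moreover have "measure Q (space Q - BadU) \<le> measure Q {\<omega> \<in> space Q.
         (\<forall>m\<in>{1..M}. bin_count g n \<omega> m > 0) \<longrightarrow>
         (\<forall>z\<in>recal g K n \<omega> ` space MX.
            (\<Sum>y=1..K. \<bar>measure P {p\<in>space P. snd p = y \<and> recal g K n \<omega> (fst p) = z}
                        / measure P {p\<in>space P. recal g K n \<omega> (fst p) = z} - z y\<bar>)
            \<le> Max ((\<lambda>m. eps M K \<alpha> (bin_count g n \<omega> m)) ` {1..M}))}"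
    by (rule QQ.finite_measure_mono[OF sub2 G2])
  ultimately show ?thesis using compl by linarith
qed

end

theorem theorem3:
  fixes MX :: "'x measure" and P :: "('x \<times> nat) measure"
    and f :: "'x \<Rightarrow> nat \<Rightarrow> real" and B :: "nat \<Rightarrow> (nat \<Rightarrow> real) set"
    and g :: "'x \<Rightarrow> nat" and K M n :: nat and \<alpha> :: real
  assumes K: "K \<ge> 1" and Mpos: "M \<ge> 1"
    and f_simplex: "\<forall>x\<in>space MX. f x \<in> prob_simplex K"
    and bins_cover: "(\<Union>m\<in>{1..M}. B m) = prob_simplex K"
    and bins_disj: "\<forall>m\<in>{1..M}. \<forall>m'\<in>{1..M}. m \<noteq> m' \<longrightarrow> B m \<inter> B m' = {}"
    and bins_meas: "\<forall>m\<in>{1..M}. f -` B m \<inter> space MX \<in> sets MX"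
    and g_def: "\<forall>x\<in>space MX. \<forall>m\<in>{1..M}. g x = m \<longleftrightarrow> f x \<in> B m"
    and P: "prob_space P" and P_sets: "sets P = sets (MX \<Otimes>\<^sub>M count_space {1..K})"
    and alpha: "0 < \<alpha>" "\<alpha> < 1"
  shows
   "measure (PiM {1..n} (\<lambda>_. P))
      {\<omega> \<in> space (PiM {1..n} (\<lambda>_. P)).
         \<forall>m\<in>{1..M}. bin_count g n \<omega> m > 0 \<longrightarrow>
           l1dist K (pi_hat g K n \<omega> m) (pi_true P g K m) \<le> eps M K \<alpha> (bin_count g n \<omega> m)}
      \<ge> 1 - \<alpha>
  \<and> measure (PiM {1..n} (\<lambda>_. P))
      {\<omega> \<in> space (PiM {1..n} (\<lambda>_. P)).
         (\<forall>m\<in>{1..M}. bin_count g n \<omega> m > 0) \<longrightarrow>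
         (\<forall>z\<in>recal g K n \<omega> ` space MX.
            (\<Sum>y=1..K. \<bar>measure P {p\<in>space P. snd p = y \<and> recal g K n \<omega> (fst p) = z}
                        / measure P {p\<in>space P. recal g K n \<omega> (fst p) = z} - z y\<bar>)
            \<le> Max ((\<lambda>m. eps M K \<alpha> (bin_count g n \<omega> m)) ` {1..M}))}
      \<ge> 1 - \<alpha>"
  proof -
  interpret C: calib MX P f B g K M n \<alpha>
    unfolding calib_def using K Mpos f_simplex bins_cover bins_disj bins_meas g_def P P_sets alpha by blast
  show ?thesis by (rule C.final)
qed

end
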